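(* Let $d$ be an integer and let $C_1$ and $C_2$ be the curves $$C_1: y^2=x^3-d^2x,\qquad C_2: y^2=x^3+d^2x.$$ For a prime $p>2$ let $N_{p,i}$ be the number of solutions $(x,y)\in\mathbb{Z}_p\times\mathbb{Z}_p$ of the defining equation of $C_i$ taken modulo $p$, and $a_{p,i}=p-N_{p,i}$. Then $a_{p,1}+a_{p,2}=0$ for every prime $p>2$ such that $-1\in QR_p$ and $\epsilon\in QNR_p$, where $\epsilon\in\mathbb{Z}_p^*$ satisfies $\epsilon^2\equiv-1\pmod p$.
   Context: $\mathbb{Z}_p$ denotes the integers modulo $p$, $\mathbb{Z}_p^*=\{1,\dots,p-1\}$. $QR_p=\{x\in\mathbb{Z}_p^*: \exists y\in\mathbb{Z}_p^*,\ y^2\equiv x \pmod p\}$ is the set of nonzero quadratic residues modulo $p$ and $QNR_p=\mathbb{Z}_p^*\setminus QR_p$ the set of quadratic nonresidues. *)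

theory Defs
  imports "HOL-Number_Theory.Number_Theory"
begin

definition QR_set :: "int \<Rightarrow> int set" where
  "QR_set p = {x \<in> {1..p-1}. \<exists>y \<in> {1..p-1}. [y^2 = x] (mod p)}"

definition QNR_set :: "int \<Rightarrow> int set" where
  "QNR_set p = {1..p-1} - QR_set p"

definition N_count :: "int \<Rightarrow> int \<Rightarrow> nat" where
  "N_count c p = card {(x, y). x \<in> {0..p-1} \<and> y \<in> {0..p-1} \<and> [y^2 = x^3 + c * x] (mod p)}"

definition a_coef :: "int \<Rightarrow> int \<Rightarrow> int" where
  "a_coef c p = p - int (N_count c p)"

end

theory Submission
  imports Defs
begin

lemma euler_int:
  fixes p a :: int
  assumes "prime p" "p > 2"
  shows "[Legendre a p = a ^ ((nat p - 1) div 2)] (mod p)"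
proof -
  have "prime (nat p)" using assms by simp
  moreover have "2 < nat p" using assms by simp
  ultimately have "[Legendre a (int (nat p)) = a ^ ((nat p - 1) div 2)] (mod int (nat p))"
    by (rule euler_criterion)
  then show ?thesis using assms by simp
qed

lemma leg_range: "Legendre a p \<in> {-1,0,1}" by (simp add: Legendre_def)

lemma leg_mult_neg:
  fixes p n b :: int
  assumes "prime p" "p > 2" "Legendre n p = -1"
  shows "Legendre (n*b) p = - Legendre b p"
proof -
  let ?h = "(nat p - 1) div 2"
  have 1: "[Legendre (n*b) p = n^?h * b^?h] (mod p)"
    using euler_int[OF assms(1,2), of "n*b"] by (simp add: power_mult_distrib)
  have 2: "[n^?h = -1] (mod p)" using euler_int[OF assms(1,2), of n] assms(3)
    by (simp add: cong_sym)
  have 3: "[b^?h = Legendre b p] (mod p)" using euler_int[OF assms(1,2), of b]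
    by (simp add: cong_sym)
  have "[n^?h * b^?h = (-1) * Legendre b p] (mod p)" using cong_mult[OF 2 3] .
  with 1 have "[Legendre (n*b) p = - Legendre b p] (mod p)"
    using cong_trans by fastforce
  then have d: "p dvd (Legendre (n*b) p + Legendre b p)"
    by (simp add: cong_iff_dvd_diff)
  have r: "\<bar>Legendre (n*b) p + Legendre b p\<bar> < p"
    using leg_range[of "n*b" p] leg_range[of b p] assms(2) by auto
  show ?thesis
  proof (rule ccontr)
    assume "Legendre (n*b) p \<noteq> - Legendre b p"
    then have "Legendre (n*b) p + Legendre b p \<noteq> 0" by simp
    from dvd_imp_le_int[OF this d] r show False by linarith
  qed
qed

lemma sq_dvd_zero:
  fixes p y :: int
  assumes "prime p" "y \<in> {0..p-1}" "p dvd y"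
  shows "y = 0"
proof (rule ccontr)
  assume "y \<noteq> 0"
  with assms have "p \<le> y" using zdvd_imp_le by force
  with assms(2) show False by simp
qed

lemma sq_count:
  fixes p a :: int
  assumes p: "prime p" "p > 2"
  shows "int (card {y\<in>{0..p-1}. [y^2 = a] (mod p)}) = 1 + Legendre a p"
proof (cases "[a = 0] (mod p)")
  case True
  have "{y\<in>{0..p-1}. [y^2 = a] (mod p)} = {0}"
  proof (intro equalityI subsetI)
    fix y assume y: "y \<in> {y\<in>{0..p-1}. [y^2 = a] (mod p)}"
    then have "[y^2 = 0] (mod p)" using True cong_trans[of "y^2" a p 0] y by blast
    then have "p dvd y^2" by (simp add: cong_0_iff)
    then have "p dvd y" using prime_dvd_power_iff[OF p(1)] by simp
    then show "y \<in> {0}" using sq_dvd_zero[OF p(1)] y by simp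
  next
    fix y assume "y \<in> {0::int}"
    then show "y \<in> {y\<in>{0..p-1}. [y^2 = a] (mod p)}" using True p
      by (auto simp: cong_sym)
  qed
  then show ?thesis using True by (simp add: Legendre_def)
next
  case nz: False
  show ?thesis
  proof (cases "QuadRes p a")
    case False
    then have e: "{y\<in>{0..p-1}. [y^2 = a] (mod p)} = {}" unfolding QuadRes_def by blast
    have "Legendre a p = -1" using nz False by (simp add: Legendre_def)
    then show ?thesis unfolding e by simp
  next
    case True
    then obtain y0 where y0: "[y0^2 = a] (mod p)" unfolding QuadRes_def by blast
    define r where "r = y0 mod p"
    have "[r^2 = y0^2] (mod p)" unfolding r_def by (simp add: cong_def power_mod)
    then have rr: "[r^2 = a] (mod p)" using cong_trans[OF _ y0] by blast
    have r0: "0 \<le> r" "r < p" unfolding r_def using p by auto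
    have "r \<noteq> 0" using rr nz by (auto simp: cong_sym)
    with r0 have r1: "0 < r" by simp
    have odd: "odd p" using p prime_odd_int by blast
    have neq: "r \<noteq> p - r"
    proof
      assume "r = p - r"
      then have "p = 2 * r" by simp
      then show False using odd by simp
    qed
    have "{y\<in>{0..p-1}. [y^2 = a] (mod p)} = {r, p - r}"
    proof (intro equalityI subsetI)
      fix y assume y: "y \<in> {y\<in>{0..p-1}. [y^2 = a] (mod p)}"
      have yy: "0 \<le> y" "y < p" using y by auto
      from y have "[y^2 = r^2] (mod p)" using cong_trans[OF _ cong_sym[OF rr]] by blast
      then have "p dvd (y - r) * (y + r)" by (simp add: cong_iff_dvd_diff power2_eq_square algebra_simps)
      then have "p dvd (y - r) \<or> p dvd (y + r)" using prime_dvd_mult_iff[OF p(1)] by blast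
      then show "y \<in> {r, p - r}"
      proof
        assume "p dvd y - r"
        then obtain k where k: "y - r = p * k" by (auto simp: dvd_def)
        have a1: "p * k < p" using k yy r0 by linarith
        have a2: "- p < p * k" using k yy r0 by linarith
        have "k < 1" using a1 p(2) mult_less_cancel_left_pos[of p k 1] by simp
        moreover have "-1 < k" using a2 p(2) mult_less_cancel_left_pos[of p "-1" k] by simp
        ultimately have "k = 0" by simp
        then show ?thesis using k by simp
      next
        assume "p dvd y + r"
        then obtain k where k: "y + r = p * k" by (auto simp: dvd_def)
        have a1: "p * k < p * 2" using k yy r0 by linarith
        have a2: "0 < p * k" using k yy r1 by linarith
        have "k < 2" using a1 p(2) mult_less_cancel_left_pos[of p k 2] by simp
        moreover have "0 < k" using a2 p(2) mult_less_cancel_left_pos[of p 0 k] by simp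
        ultimately have "k = 1" by simp
        then show ?thesis using k by simp
      qed
    next
      fix y assume "y \<in> {r, p - r}"
      moreover have "[(p - r)^2 = a] (mod p)"
      proof -
        have "(p - r)^2 = r^2 + p * (p - 2*r)" by (simp add: power2_eq_square algebra_simps)
        then have "[(p - r)^2 = r^2] (mod p)" by (simp add: cong_iff_dvd_diff)
        then show ?thesis using cong_trans[OF _ rr] by blast
      qed
      ultimately show "y \<in> {y\<in>{0..p-1}. [y^2 = a] (mod p)}" using rr r0 r1 by auto
    qed
    then show ?thesis using neq nz True by (simp add: Legendre_def)
  qed
qed

lemma S_cong:
  fixes p a b :: int
  assumes "[a = b] (mod p)"
  shows "card {y\<in>{0..p-1}. [y^2 = a] (mod p)} = card {y\<in>{0..p-1}. [y^2 = b] (mod p)}"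
proof -
  have "\<And>y. [y^2 = a] (mod p) \<longleftrightarrow> [y^2 = b] (mod p)"
  proof
    fix y :: int
    assume "[y^2 = a] (mod p)" then show "[y^2 = b] (mod p)" using cong_trans[OF _ assms] by blast
  next
    fix y :: int
    assume "[y^2 = b] (mod p)" then show "[y^2 = a] (mod p)" using cong_trans[OF _ cong_sym[OF assms]] by blast
  qed
  then show ?thesis by simp
qed

lemma N_sum:
  fixes c p :: int
  shows "N_count c p = (\<Sum>x\<in>{0..p-1}. card {y\<in>{0..p-1}. [y^2 = x^3 + c*x] (mod p)})"
proof -
  have "{(x, y). x \<in> {0..p-1} \<and> y \<in> {0..p-1} \<and> [y^2 = x^3 + c * x] (mod p)}
      = Sigma {0..p-1} (\<lambda>x. {y\<in>{0..p-1}. [y^2 = x^3 + c*x] (mod p)})" (is "_ = ?S") by auto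
  moreover have fin: "\<forall>x\<in>{0..p-1}. finite {y\<in>{0..p-1}. [y^2 = x^3 + c*x] (mod p)}" by (intro ballI finite_subset[OF _ finite_atLeastAtMost_int[of 0 "p-1"]]) auto
  have "card ?S = (\<Sum>x\<in>{0..p-1}. card {y\<in>{0..p-1}. [y^2 = x^3 + c*x] (mod p)})"
    by (rule card_SigmaI[OF finite_atLeastAtMost_int fin])
  ultimately show ?thesis unfolding N_count_def by simp
qed

lemma pair_two:
  fixes p n b :: int
  assumes "prime p" "p > 2" "Legendre n p = -1"
  shows "int (card {y\<in>{0..p-1}. [y^2 = n*b] (mod p)}) + int (card {y\<in>{0..p-1}. [y^2 = b] (mod p)}) = 2"
  using sq_count[OF assms(1,2), of "n*b"] sq_count[OF assms(1,2), of b] leg_mult_neg[OF assms, of b]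
  by simp

lemma small_dvd_zero:
  fixes p z :: int
  assumes "p dvd z" "\<bar>z\<bar> < p"
  shows "z = 0"
proof (rule ccontr)
  assume "z \<noteq> 0"
  from dvd_imp_le_int[OF this assms(1)] assms(2) show False by linarith
qed

theorem lemma7:
  fixes d p \<epsilon> :: int
  assumes "prime p" and "p > 2"
    and "(-1) mod p \<in> QR_set p"
    and "\<epsilon> \<in> {1..p-1}" and "[\<epsilon>^2 = -1] (mod p)"
    and "\<epsilon> \<in> QNR_set p"
  shows "a_coef (- (d^2)) p + a_coef (d^2) p = 0"
proof -
  note p = assms(1,2)
  define n where "n = - \<epsilon>"
  define X where "X = {0..p-1}"
  define S where "S a = card {y\<in>{0..p-1}. [y^2 = a] (mod p)}" for a
  have eps: "1 \<le> \<epsilon>" "\<epsilon> < p" using assms(4) by auto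
  have not_dvd: "\<not> p dvd \<epsilon>"
  proof
    assume "p dvd \<epsilon>"
    then have "p \<le> \<epsilon>" using zdvd_imp_le eps by force
    with eps show False by simp
  qed
  obtain z where z: "[z^2 = -1] (mod p)"
    using assms(3) unfolding QR_set_def by auto
  have nQR: "\<not> QuadRes p n"
  proof
    assume "QuadRes p n"
    then obtain y where y: "[y^2 = - \<epsilon>] (mod p)" unfolding QuadRes_def n_def by blast
    have "[(y*z)^2 = (- \<epsilon>) * (-1)] (mod p)" unfolding power_mult_distrib using cong_mult[OF y z] .
    then have yz: "[(y*z)^2 = \<epsilon>] (mod p)" by simp
    define w where "w = (y*z) mod p"
    have "[w^2 = (y*z)^2] (mod p)" unfolding w_def by (simp add: cong_def power_mod)
    then have w2: "[w^2 = \<epsilon>] (mod p)" using cong_trans[OF _ yz] by blast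
    have w0: "0 \<le> w" "w < p" unfolding w_def using p by auto
    have "w \<noteq> 0"
    proof
      assume "w = 0"
      then have "[0 = \<epsilon>] (mod p)" using w2 by simp
      then have "[\<epsilon> = 0] (mod p)" by (rule cong_sym)
      then have "p dvd \<epsilon>" by (simp add: cong_0_iff)
      with not_dvd show False by simp
    qed
    with w0 have "w \<in> {1..p-1}" by simp
    with w2 eps have "\<epsilon> \<in> QR_set p" unfolding QR_set_def by auto
    with assms(6) show False unfolding QNR_set_def by simp
  qed
  have n0: "\<not> [n = 0] (mod p)"
  proof
    assume "[n = 0] (mod p)"
    then have "p dvd \<epsilon>" unfolding n_def by (simp add: cong_0_iff)
    with not_dvd show False by simp
  qed
  have Ln: "Legendre n p = -1" using nQR n0 by (simp add: Legendre_def)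
  define h where "h x = (\<epsilon> * x) mod p" for x
  have inj: "inj_on h X"
  proof (rule inj_onI)
    fix x x' assume x: "x \<in> X" "x' \<in> X" and e: "h x = h x'"
    then have "[\<epsilon> * x = \<epsilon> * x'] (mod p)" unfolding h_def cong_def by simp
    then have "p dvd \<epsilon> * (x - x')" by (simp add: cong_iff_dvd_diff algebra_simps)
    then have "p dvd (x - x')" using prime_dvd_mult_iff[OF p(1)] not_dvd by blast
    moreover have "\<bar>x - x'\<bar> < p" using x unfolding X_def by auto
    ultimately have "x - x' = 0" by (rule small_dvd_zero)
    then show "x = x'" by simp
  qed
  have sub: "h ` X \<subseteq> X" unfolding h_def X_def using p by auto
  have hX: "h ` X = X" using endo_inj_surj[OF _ sub inj] unfolding X_def by simp
  have key: "[(h x)^3 + d^2 * h x = n * (x^3 + (- (d^2)) * x)] (mod p)" for x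
  proof -
    have m: "[h x = \<epsilon> * x] (mod p)" unfolding h_def by simp
    have 1: "[(h x)^3 + d^2 * h x = (\<epsilon> * x)^3 + d^2 * (\<epsilon> * x)] (mod p)"
      using cong_add[OF cong_pow[OF m, of 3] cong_mult[OF cong_refl[of "d^2"] m]] .
    have e2: "[\<epsilon>^2 * (\<epsilon> * x^3) = (-1) * (\<epsilon> * x^3)] (mod p)"
      using cong_mult[OF assms(5) cong_refl[of "\<epsilon> * x^3"]] .
    have "(\<epsilon> * x)^3 = \<epsilon>^2 * (\<epsilon> * x^3)" by (simp add: power2_eq_square power3_eq_cube)
    with e2 have "[(\<epsilon> * x)^3 = (-1) * (\<epsilon> * x^3)] (mod p)" by simp
    then have 2: "[(\<epsilon> * x)^3 + d^2 * (\<epsilon> * x) = (-1) * (\<epsilon> * x^3) + d^2 * (\<epsilon> * x)] (mod p)"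
      using cong_add[OF _ cong_refl] by blast
    have 3: "(-1) * (\<epsilon> * x^3) + d^2 * (\<epsilon> * x) = n * (x^3 + (- (d^2)) * x)"
      unfolding n_def by (simp add: algebra_simps)
    show ?thesis using cong_trans[OF 1 2] 3 by simp
  qed
  have N1: "N_count (d^2) p = (\<Sum>x\<in>X. S (n * (x^3 + (- (d^2)) * x)))"
  proof -
    have "N_count (d^2) p = (\<Sum>x\<in>X. S (x^3 + d^2 * x))" unfolding N_sum S_def X_def ..
    also have "\<dots> = (\<Sum>x\<in>h ` X. S (x^3 + d^2 * x))" using hX by simp
    also have "\<dots> = (\<Sum>x\<in>X. S ((h x)^3 + d^2 * h x))" using sum.reindex[OF inj] by simp
    also have "\<dots> = (\<Sum>x\<in>X. S (n * (x^3 + (- (d^2)) * x)))"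
      by (rule sum.cong[OF refl]) (unfold S_def, rule S_cong[OF key])
    finally show ?thesis .
  qed
  have N2: "N_count (- (d^2)) p = (\<Sum>x\<in>X. S (x^3 + (- (d^2)) * x))"
    unfolding N_sum S_def X_def ..
  have "int (N_count (d^2) p) + int (N_count (- (d^2)) p)
      = (\<Sum>x\<in>X. int (S (n * (x^3 + (- (d^2)) * x))) + int (S (x^3 + (- (d^2)) * x)))"
    unfolding N1 N2 by (simp add: sum.distrib)
  also have "\<dots> = (\<Sum>x\<in>X. 2)"
    by (rule sum.cong[OF refl]) (unfold S_def, rule pair_two[OF p Ln])
  also have "\<dots> = 2 * p" unfolding X_def using p by simp
  finally show ?thesis unfolding a_coef_def by simp
qed

end
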